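(* Let $h>0$, $\beta>0$, $f(x)=hx$, $g(r)=\frac12\log(1-r^2)+\frac{\beta^2}{2}(1-r^2)^2$, $q_P=\max\big(1-\frac{1}{\sqrt2\beta},0\big)$, $\mathrm{Plef}(\beta)=[\sqrt{q_P},1]$, and $\tilde{\mathcal{B}}(\alpha,r)=f(r\alpha)+\sqrt2\beta r^2\sqrt{1-\alpha^2}+g(r)$. Then $$\sup_{r\in\mathrm{Plef}(\beta),\,\alpha\in[-1,1]}\tilde{\mathcal{B}}(\alpha,r)=\sup_{q\in[q_P,1)}\mathscr{B}(q),\qquad \mathscr{B}(q)=\sqrt{h^2q+2\beta^2q^2}+\frac12\log(1-q)+\frac{\beta^2}{2}(1-q)^2,$$ where $\mathscr{B}$ is concave on $[q_P,1)$ with a unique maximizer $\hat q$, which is the unique solution in $(q_P,1)$ of $$\frac{q}{h^2+2q\beta^2}=(1-q)^2.$$ Moreover the unique maximizer of the left-hand side is $\hat r=\sqrt{\hat q}$, $\hat\alpha=\frac{h}{\sqrt{h^2+2\beta^2\hat q}}$.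
   Context: At $r=1$, $g(1)=-\infty$ and hence $\tilde{\mathcal{B}}(\alpha,1)=-\infty$. *)

theory Defs
  imports "HOL-Analysis.Analysis" "HOL-Library.Extended_Real"
begin

definition qP :: "real \<Rightarrow> real" where
  "qP \<beta> = max (1 - 1 / (sqrt 2 * \<beta>)) 0"

definition Plef :: "real \<Rightarrow> real set" where
  "Plef \<beta> = {sqrt (qP \<beta>) .. 1}"

definition gfun :: "real \<Rightarrow> real \<Rightarrow> ereal" where
  "gfun \<beta> r = (if r\<^sup>2 = 1 then -\<infinity>
      else ereal (ln (1 - r\<^sup>2) / 2 + \<beta>\<^sup>2 / 2 * (1 - r\<^sup>2)\<^sup>2))"

definition Btilde :: "real \<Rightarrow> real \<Rightarrow> real \<Rightarrow> real \<Rightarrow> ereal" where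
  "Btilde h \<beta> \<alpha> r = ereal (h * (r * \<alpha>) + sqrt 2 * \<beta> * r\<^sup>2 * sqrt (1 - \<alpha>\<^sup>2)) + gfun \<beta> r"

definition Bscr :: "real \<Rightarrow> real \<Rightarrow> real \<Rightarrow> real" where
  "Bscr h \<beta> q = sqrt (h\<^sup>2 * q + 2 * \<beta>\<^sup>2 * q\<^sup>2) + ln (1 - q) / 2 + \<beta>\<^sup>2 / 2 * (1 - q)\<^sup>2"

end

theory Submission
  imports Defs
begin

lemma cs2:
  fixes u v p1 p2 s1 s2 :: real
  assumes "u \<ge> 0" "v \<ge> 0"
  shows "u * (p1 * s1) + v * (p2 * s2) \<le> sqrt((u * p1\<^sup>2+v * p2\<^sup>2) * (u * s1\<^sup>2+v * s2\<^sup>2))"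
    and "u > 0 \<Longrightarrow> v > 0 \<Longrightarrow> p1 * s2 \<noteq> p2 * s1 \<Longrightarrow>
         u * (p1 * s1) + v * (p2 * s2) < sqrt((u * p1\<^sup>2+v * p2\<^sup>2) * (u * s1\<^sup>2+v * s2\<^sup>2))"
proof -
  have id: "(u * p1\<^sup>2+v * p2\<^sup>2) * (u * s1\<^sup>2+v * s2\<^sup>2) = (u * (p1 * s1) + v * (p2 * s2))\<^sup>2 + u * v * (p1 * s2-p2 * s1)\<^sup>2"
    by (simp add: power2_eq_square algebra_simps)
  have "u * v * (p1 * s2-p2 * s1)\<^sup>2 \<ge> 0" using assms by simp
  then show "u * (p1 * s1) + v * (p2 * s2) \<le> sqrt((u * p1\<^sup>2+v * p2\<^sup>2) * (u * s1\<^sup>2+v * s2\<^sup>2))"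
    by (intro real_le_rsqrt) (simp add: id)
  assume "u > 0" "v > 0" "p1 * s2 \<noteq> p2 * s1"
  then have "u * v * (p1 * s2-p2 * s1)\<^sup>2 > 0" by simp
  then show "u * (p1 * s1) + v * (p2 * s2) < sqrt((u * p1\<^sup>2+v * p2\<^sup>2) * (u * s1\<^sup>2+v * s2\<^sup>2))"
    by (intro real_less_rsqrt) (simp add: id)
qed

lemma cs1:
  fixes A B a b :: real
  assumes "a\<^sup>2 + b\<^sup>2 = 1"
  shows "A * a + B * b \<le> sqrt (A\<^sup>2 + B\<^sup>2)"
    and "A * a + B * b = sqrt (A\<^sup>2 + B\<^sup>2) \<Longrightarrow> A * b = B * a"
proof -
  have id: "A\<^sup>2 + B\<^sup>2 = (A * a + B * b)\<^sup>2 + (A * b - B * a)\<^sup>2"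
  proof -
    have "A\<^sup>2 + B\<^sup>2 = (A\<^sup>2 + B\<^sup>2) * (a\<^sup>2 + b\<^sup>2)" using assms by simp
    also have "\<dots> = (A * a + B * b)\<^sup>2 + (A * b - B * a)\<^sup>2" by (simp add: power2_eq_square algebra_simps)
    finally show ?thesis .
  qed
  show "A * a + B * b \<le> sqrt (A\<^sup>2 + B\<^sup>2)"
    by (intro real_le_rsqrt) (simp add: id)
  assume e: "A * a + B * b = sqrt (A\<^sup>2 + B\<^sup>2)"
  then have "(A * a + B * b)\<^sup>2 = A\<^sup>2 + B\<^sup>2" by simp
  with id have "(A * b - B * a)\<^sup>2 = 0" by linarith
  then show "A * b = B * a" by simp
qed

context
  fixes h \<beta> :: real
  assumes hp: "h > 0" and bp: "\<beta> > 0"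
begin

lemma qP_bounds: "0 \<le> qP \<beta>" "qP \<beta> < 1" "1 - 1/(sqrt 2 * \<beta>) \<le> qP \<beta>"
  using bp by (auto simp: qP_def)

lemma one_minus_q_bound:
  assumes "q \<in> {qP \<beta>..<1}"
  shows "2*\<beta>\<^sup>2 * (1-q)\<^sup>2 \<le> 1"
proof -
  have a: "0 < 1 - q" "1 - q \<le> 1/(sqrt 2 * \<beta>)" using assms qP_bounds by auto
  have "(1-q)\<^sup>2 \<le> (1/(sqrt 2 * \<beta>))\<^sup>2" using a by (intro power_mono) auto
  also have "\<dots> = 1/(2*\<beta>\<^sup>2)" by (simp add: power2_eq_square field_simps)
  finally show ?thesis using bp by (simp add: field_simps)
qed

definition Sf :: "real \<Rightarrow> real" where "Sf q = sqrt (h\<^sup>2 * q + 2 * \<beta>\<^sup>2 * q\<^sup>2)"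
definition Rf :: "real \<Rightarrow> real" where "Rf q = ln (1 - q) / 2 + \<beta>\<^sup>2 / 2 * (1 - q)\<^sup>2"

lemma Bscr_split: "Bscr h \<beta> q = Sf q + Rf q"
  by (simp add: Bscr_def Sf_def Rf_def)

lemma Sf_alt: "q \<ge> 0 \<Longrightarrow> Sf q = sqrt q * sqrt (h\<^sup>2 + 2 * \<beta>\<^sup>2 * q)"
proof -
  have e: "h\<^sup>2 * q + 2 * \<beta>\<^sup>2 * q\<^sup>2 = q * (h\<^sup>2 + 2 * \<beta>\<^sup>2 * q)"
    by (simp add: power2_eq_square algebra_simps)
  show ?thesis unfolding Sf_def e by (simp add: real_sqrt_mult)
qed

lemma Sf_conc:
  assumes "x \<ge> 0" "y \<ge> 0" "u \<ge> 0" "v \<ge> 0" "u + v = 1"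
  shows "u * Sf x + v * Sf y \<le> Sf (u * x + v * y)"
    and "u > 0 \<Longrightarrow> v > 0 \<Longrightarrow> x \<noteq> y \<Longrightarrow> u * Sf x + v * Sf y < Sf (u * x + v * y)"
proof -
  define p1 where "p1 = sqrt x"
  define p2 where "p2 = sqrt y"
  define s1 where "s1 = sqrt (h\<^sup>2 + 2 * \<beta>\<^sup>2 * x)"
  define s2 where "s2 = sqrt (h\<^sup>2 + 2 * \<beta>\<^sup>2 * y)"
  have pos: "h\<^sup>2 + 2 * \<beta>\<^sup>2 * x \<ge> 0" "h\<^sup>2 + 2 * \<beta>\<^sup>2 * y \<ge> 0" using assms by auto
  have sq: "p1\<^sup>2 = x" "p2\<^sup>2 = y" "s1\<^sup>2 = h\<^sup>2 + 2 * \<beta>\<^sup>2 * x" "s2\<^sup>2 = h\<^sup>2 + 2 * \<beta>\<^sup>2 * y"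
    unfolding p1_def p2_def s1_def s2_def using pos assms by simp_all
  have Sx: "Sf x = p1 * s1" unfolding p1_def s1_def by (rule Sf_alt[OF assms(1)])
  have Sy: "Sf y = p2 * s2" unfolding p2_def s2_def by (rule Sf_alt[OF assms(2)])
  have w0: "u * x + v * y \<ge> 0" using assms by simp
  have e1: "u * s1\<^sup>2 + v * s2\<^sup>2 = (u + v) * h\<^sup>2 + 2 * \<beta>\<^sup>2 * (u * x + v * y)"
    unfolding sq by (simp add: algebra_simps)
  have e2: "u * p1\<^sup>2 + v * p2\<^sup>2 = u * x + v * y" unfolding sq ..
  have Sm: "Sf (u * x + v * y) = sqrt((u * p1\<^sup>2 + v * p2\<^sup>2) * (u * s1\<^sup>2 + v * s2\<^sup>2))"
    unfolding e1 e2 assms(5) Sf_alt[OF w0] by (simp add: real_sqrt_mult)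
  show "u * Sf x + v * Sf y \<le> Sf (u * x + v * y)"
    unfolding Sx Sy Sm using cs2(1) assms(3,4) .
  assume uv: "u > 0" "v > 0" "x \<noteq> y"
  have ne: "p1 * s2 \<noteq> p2 * s1"
  proof
    assume "p1 * s2 = p2 * s1"
    then have "(p1 * s2)\<^sup>2 = (p2 * s1)\<^sup>2" by simp
    then have "p1\<^sup>2 * s2\<^sup>2 = p2\<^sup>2 * s1\<^sup>2" by (simp only: power_mult_distrib)
    then have "x * (h\<^sup>2 + 2 * \<beta>\<^sup>2 * y) = y * (h\<^sup>2 + 2 * \<beta>\<^sup>2 * x)" unfolding sq .
    then have "x * h\<^sup>2 = y * h\<^sup>2" by (simp add: algebra_simps)
    then show False using uv hp by simp
  qed
  show "u * Sf x + v * Sf y < Sf (u * x + v * y)"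
    unfolding Sx Sy Sm by (rule cs2(2)[OF assms(3,4) uv(1,2) ne])
qed

lemma Rf_conc: "concave_on {qP \<beta>..<1} Rf"
proof (rule f''_le0_imp_concave[where f' = "\<lambda>q. - 1/(2 * (1-q)) - \<beta>\<^sup>2 * (1-q)"
      and f'' = "\<lambda>q. - 1/(2 * (1-q)\<^sup>2) + \<beta>\<^sup>2"])
  show "convex {qP \<beta>..<1}" by simp
next
  fix x assume x: "x \<in> {qP \<beta>..<1}"
  then have x1: "x < 1" by simp
  show "DERIV Rf x :> (- 1/(2 * (1-x)) - \<beta>\<^sup>2 * (1-x))"
    unfolding Rf_def
    using x1 by (auto intro!: derivative_eq_intros simp: field_simps power2_eq_square)
  show "DERIV (\<lambda>q. - 1/(2 * (1-q)) - \<beta>\<^sup>2 * (1-q)) x :> (- 1/(2 * (1-x)\<^sup>2) + \<beta>\<^sup>2)"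
    using x1 apply (auto intro!: derivative_eq_intros)
    apply (simp add: field_simps power2_eq_square)
    proof -
      have "(1-x)^2 > 0" using x1 by simp
      then have nz: "2 + x * (x * 2) - x * 4 > 0" by (simp add: power2_eq_square algebra_simps)
      have g: "\<And>d::real. 2/(2*d) = 1/d" by simp
      have e: "4 + x * (x * 4) - x * 8 = 2 * (2 + x * (x * 2) - x * 4)" by (simp add: algebra_simps)
      show "2 / (4 + x * (x * 4) - x * 8) = 1 / (2 + x * (x * 2) - x * 4)"
        unfolding e by (rule g)
    qed
  have "2*\<beta>\<^sup>2 * (1-x)\<^sup>2 \<le> 1" using one_minus_q_bound x by simp
  then show "- 1/(2 * (1-x)\<^sup>2) + \<beta>\<^sup>2 \<le> 0" using x1 by (simp add: field_simps)
qed


lemma Sf_conc_on: "concave_on {qP \<beta>..<1} Sf"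
  unfolding concave_on_iff
proof (intro conjI ballI allI impI)
  fix x y u v :: real
  assume "x \<in> {qP \<beta>..<1}" "y \<in> {qP \<beta>..<1}" "u \<ge> 0" "v \<ge> 0" "u + v = 1"
  then show "u * Sf x + v * Sf y \<le> Sf (u *\<^sub>R x + v *\<^sub>R y)"
    using Sf_conc(1)[of x y u v] qP_bounds by auto
qed simp

lemma Bscr_eq: "Bscr h \<beta> = (\<lambda>q. Sf q + Rf q)"
  by (rule ext) (simp add: Bscr_split)

lemma Bscr_conc: "concave_on {qP \<beta>..<1} (Bscr h \<beta>)"
  unfolding Bscr_eq by (intro concave_on_add Sf_conc_on Rf_conc)

lemma Bscr_mid_strict:
  assumes "x \<in> {qP \<beta>..<1}" "y \<in> {qP \<beta>..<1}" "x \<noteq> y"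
  shows "Bscr h \<beta> ((x+y)/2) > (Bscr h \<beta> x + Bscr h \<beta> y)/2"
proof -
  have "(1/2) * Sf x + (1/2) * Sf y < Sf ((1/2)*x + (1/2)*y)"
    using Sf_conc(2)[of x y "1/2" "1/2"] assms qP_bounds by auto
  moreover have "(1 - 1/2) * Rf x + (1/2) * Rf y \<le> Rf ((1 - 1/2) *\<^sub>R x + (1/2) *\<^sub>R y)"
    using concave_onD[OF Rf_conc, of "1/2" x y] assms by auto
  ultimately show ?thesis unfolding Bscr_split by (simp add: field_simps)
qed

lemma max_unique:
  assumes "q1 \<in> {qP \<beta>..<1}" "q2 \<in> {qP \<beta>..<1}"
    and "\<forall>q \<in> {qP \<beta>..<1}. Bscr h \<beta> q \<le> Bscr h \<beta> q1"
    and "\<forall>q \<in> {qP \<beta>..<1}. Bscr h \<beta> q \<le> Bscr h \<beta> q2"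
  shows "q1 = q2"
proof (rule ccontr)
  assume ne: "q1 \<noteq> q2"
  have m: "(q1+q2)/2 \<in> {qP \<beta>..<1}" using assms(1,2) by auto
  have "Bscr h \<beta> q1 = Bscr h \<beta> q2" using assms by force
  then have "Bscr h \<beta> ((q1+q2)/2) > Bscr h \<beta> q1" using Bscr_mid_strict[OF assms(1,2) ne] by simp
  then show False using assms(3)[rule_format, OF m] by linarith
qed

lemma Bscr_deriv:
  assumes "0 < q" "q < 1"
  shows "DERIV (Bscr h \<beta>) q :> ((h\<^sup>2 + 4*\<beta>\<^sup>2*q) / (2 * Sf q) - 1/(2 * (1-q)) - \<beta>\<^sup>2 * (1-q))"
proof -
  have pos: "h\<^sup>2 * q + 2 * \<beta>\<^sup>2 * q\<^sup>2 > 0" using assms hp by (simp add: add_pos_nonneg)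
  have "DERIV Sf q :> (h\<^sup>2 + 4*\<beta>\<^sup>2*q) / (2 * Sf q)"
    unfolding Sf_def using pos
    apply (auto intro!: derivative_eq_intros)
    apply (simp add: field_simps power2_eq_square)
    done
  moreover have "DERIV Rf q :> (- 1/(2 * (1-q)) - \<beta>\<^sup>2 * (1-q))"
    unfolding Rf_def using assms
    by (auto intro!: derivative_eq_intros simp: field_simps power2_eq_square)
  ultimately show ?thesis unfolding Bscr_eq
    by (auto intro!: derivative_eq_intros)
qed

lemma root_deriv0:
  assumes q: "0 < q" "q < 1" and eq: "q / (h\<^sup>2 + 2 * q * \<beta>\<^sup>2) = (1 - q)\<^sup>2"
  shows "(h\<^sup>2 + 4*\<beta>\<^sup>2*q) / (2 * Sf q) - 1/(2 * (1-q)) - \<beta>\<^sup>2 * (1-q) = 0"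
proof -
  define a where "a = sqrt q"
  define m where "m = sqrt (h\<^sup>2 + 2*\<beta>\<^sup>2*q)"
  have mp: "h\<^sup>2 + 2*\<beta>\<^sup>2*q > 0" using q hp by (simp add: add_pos_nonneg)
  have a2: "a\<^sup>2 = q" "a > 0" using q unfolding a_def by auto
  have m2: "m\<^sup>2 = h\<^sup>2 + 2*\<beta>\<^sup>2*q" "m > 0" using mp unfolding m_def by auto
  have S: "Sf q = a * m" unfolding Sf_def a_def m_def
    by (subst real_sqrt_mult[symmetric]) (simp add: power2_eq_square algebra_simps)
  have "1 - q = sqrt ((1-q)\<^sup>2)" using q by simp
  also have "\<dots> = sqrt (q / (h\<^sup>2 + 2*\<beta>\<^sup>2*q))" using eq by (simp add: mult_ac)
  also have "\<dots> = a / m" unfolding a_def m_def by (simp add: real_sqrt_divide)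
  finally have t: "1 - q = a / m" .
  show ?thesis unfolding S t
    using a2 m2 apply (simp add: field_simps power2_eq_square)
  proof -
    assume h1: "a * a = q" and h2: "m * m = h * h + \<beta> * (\<beta> * (q * 2))"
    have e1: "a * (a * (a * (m * 4))) = a * m * 4 * q" using h1 by (simp add: algebra_simps flip: h1)
    have e2: "a * (m * (m * (m * 2))) = a * m * 2 * (h * h + \<beta> * (\<beta> * (q * 2)))"
      by (simp add: algebra_simps flip: h2)
    show "a * (h * (h * (m * 2))) + \<beta> * (\<beta> * (a * (m * (q * 8)))) =
        a * (m * (m * (m * 2))) + \<beta> * (\<beta> * (a * (a * (a * (m * 4)))))"
      unfolding e1 e2 by (simp add: algebra_simps)
  qed
qed

lemma root_max:
  assumes q: "q \<in> {qP \<beta><..<1}" and eq: "q / (h\<^sup>2 + 2 * q * \<beta>\<^sup>2) = (1 - q)\<^sup>2"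
  shows "\<forall>x \<in> {qP \<beta>..<1}. Bscr h \<beta> x \<le> Bscr h \<beta> q"
proof
  fix x assume x: "x \<in> {qP \<beta>..<1}"
  have q01: "0 < q" "q < 1" using q qP_bounds by auto
  have cv: "convex_on {qP \<beta>..<1} (\<lambda>x. - Bscr h \<beta> x)"
    using Bscr_conc unfolding concave_on_def .
  have d: "DERIV (\<lambda>x. - Bscr h \<beta> x) q :> - 0"
    using Bscr_deriv[OF q01] root_deriv0[OF q01 eq]
    by (metis DERIV_minus)
  have "(- Bscr h \<beta> x) - (- Bscr h \<beta> q) \<ge> (- 0) * (x - q)"
    apply (rule convex_on_imp_above_tangent[OF cv])
    using q x d by (auto intro: has_field_derivative_at_within)
  then show "Bscr h \<beta> x \<le> Bscr h \<beta> q" by simp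
qed

lemma root_exists:
  "\<exists>q. q \<in> {qP \<beta><..<1} \<and> q / (h\<^sup>2 + 2 * q * \<beta>\<^sup>2) = (1 - q)\<^sup>2"
proof -
  define F where "F q = q - (1-q)\<^sup>2 * (h\<^sup>2 + 2*\<beta>\<^sup>2*q)" for q
  have F0: "F (qP \<beta>) < 0"
  proof (cases "qP \<beta> = 0")
    case True then show ?thesis using hp by (simp add: F_def)
  next
    case False
    then have e: "qP \<beta> = 1 - 1/(sqrt 2 * \<beta>)" unfolding qP_def by (auto simp: max_def split: if_splits)
    have "(1 - qP \<beta>)\<^sup>2 = 1/(2*\<beta>\<^sup>2)" unfolding e by (simp add: power2_eq_square field_simps)
    then have "F (qP \<beta>) = - h\<^sup>2/(2*\<beta>\<^sup>2)" unfolding F_def using bp by (simp add: field_simps)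
    then show ?thesis using hp bp by simp
  qed
  have F1: "F 1 = 1" by (simp add: F_def)
  obtain x where x: "qP \<beta> \<le> x" "x \<le> 1" "F x = 0"
    using IVT[of F "qP \<beta>" 0 1] F0 F1 qP_bounds unfolding F_def
    by (auto intro!: continuous_intros)
  have "x \<noteq> qP \<beta>" "x \<noteq> 1" using x F0 F1 by auto
  then have xi: "x \<in> {qP \<beta><..<1}" using x by auto
  have "h\<^sup>2 + 2 * x * \<beta>\<^sup>2 > 0" using hp xi qP_bounds by (simp add: add_pos_nonneg)
  then have "x / (h\<^sup>2 + 2 * x * \<beta>\<^sup>2) = (1 - x)\<^sup>2" using x(3) unfolding F_def
    by (simp add: field_simps)
  then show ?thesis using xi by blast
qed


lemma Btilde_one: "Btilde h \<beta> a 1 = -\<infinity>"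
  by (simp add: Btilde_def gfun_def)

lemma Btilde_lt1:
  assumes "0 \<le> r" "r < 1"
  shows "Btilde h \<beta> a r = ereal (h * (r * a) + sqrt 2 * \<beta> * r\<^sup>2 * sqrt (1 - a\<^sup>2) + Rf (r\<^sup>2))"
proof -
  have "r\<^sup>2 \<noteq> 1" using assms by (metis abs_of_nonneg less_irrefl real_sqrt_abs real_sqrt_one)
  then show ?thesis by (simp add: Btilde_def gfun_def Rf_def)
qed

lemma lin_bound:
  assumes "a \<in> {-1..1}" "0 \<le> r"
  shows "h * (r * a) + sqrt 2 * \<beta> * r\<^sup>2 * sqrt (1 - a\<^sup>2) \<le> Sf (r\<^sup>2)"
    and "0 < r \<Longrightarrow> h * (r * a) + sqrt 2 * \<beta> * r\<^sup>2 * sqrt (1 - a\<^sup>2) = Sf (r\<^sup>2)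
         \<Longrightarrow> a = h / sqrt (h\<^sup>2 + 2 * \<beta>\<^sup>2 * r\<^sup>2)"
proof -
  have a2: "a\<^sup>2 \<le> 1" using assms(1) by (auto simp: abs_square_le_1)
  define b where "b = sqrt (1 - a\<^sup>2)"
  have b2: "a\<^sup>2 + b\<^sup>2 = 1" "b \<ge> 0" using a2 unfolding b_def by auto
  define A where "A = h * r"
  define B where "B = sqrt 2 * \<beta> * r\<^sup>2"
  have AB: "A\<^sup>2 + B\<^sup>2 = h\<^sup>2 * r\<^sup>2 + 2 * \<beta>\<^sup>2 * (r\<^sup>2)\<^sup>2"
    unfolding A_def B_def by (simp add: power_mult_distrib power2_eq_square)
  have L: "h * (r * a) + sqrt 2 * \<beta> * r\<^sup>2 * sqrt (1 - a\<^sup>2) = A * a + B * b"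
    unfolding A_def B_def b_def by simp
  have S: "Sf (r\<^sup>2) = sqrt (A\<^sup>2 + B\<^sup>2)" unfolding AB Sf_def ..
  show "h * (r * a) + sqrt 2 * \<beta> * r\<^sup>2 * sqrt (1 - a\<^sup>2) \<le> Sf (r\<^sup>2)"
    unfolding L S by (rule cs1(1)[OF b2(1)])
  assume r: "0 < r" and e: "h * (r * a) + sqrt 2 * \<beta> * r\<^sup>2 * sqrt (1 - a\<^sup>2) = Sf (r\<^sup>2)"
  have Ap: "A > 0" "B > 0" unfolding A_def B_def using r hp bp by auto
  have par: "A * b = B * a" using cs1(2)[OF b2(1)] e unfolding L S by simp
  have ag: "a \<ge> 0"
  proof -
    have "B * a \<ge> 0" using par Ap b2 by (metis mult_nonneg_nonneg less_imp_le)
    then show ?thesis using Ap by (simp add: zero_le_mult_iff)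
  qed
  have bb: "b = B * a / A" using par Ap by (simp add: field_simps)
  have "a\<^sup>2 * (A\<^sup>2 + B\<^sup>2) = A\<^sup>2"
  proof -
    have "A\<^sup>2 = A\<^sup>2 * (a\<^sup>2 + b\<^sup>2)" using b2 by simp
    also have "\<dots> = a\<^sup>2 * (A\<^sup>2 + B\<^sup>2)" unfolding bb using Ap by (simp add: field_simps power2_eq_square)
    finally show ?thesis by simp
  qed
  then have "a\<^sup>2 = A\<^sup>2 / (A\<^sup>2 + B\<^sup>2)" using Ap by (simp add: field_simps add_pos_pos)
  also have "\<dots> = (r\<^sup>2 * h\<^sup>2) / (r\<^sup>2 * (h\<^sup>2 + 2 * \<beta>\<^sup>2 * r\<^sup>2))"
    unfolding AB by (simp add: A_def power_mult_distrib power2_eq_square algebra_simps)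
  also have "\<dots> = h\<^sup>2 / (h\<^sup>2 + 2 * \<beta>\<^sup>2 * r\<^sup>2)"
    using r by (intro mult_divide_mult_cancel_left) simp
  finally have "a = sqrt (h\<^sup>2 / (h\<^sup>2 + 2 * \<beta>\<^sup>2 * r\<^sup>2))" using ag by (metis real_sqrt_unique)
  then show "a = h / sqrt (h\<^sup>2 + 2 * \<beta>\<^sup>2 * r\<^sup>2)" using hp by (simp add: real_sqrt_divide)
qed

lemma lin_attain:
  assumes "0 < r"
  shows "h * (r * (h / sqrt (h\<^sup>2 + 2 * \<beta>\<^sup>2 * r\<^sup>2))) + sqrt 2 * \<beta> * r\<^sup>2 * sqrt (1 - (h / sqrt (h\<^sup>2 + 2 * \<beta>\<^sup>2 * r\<^sup>2))\<^sup>2)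
    = Sf (r\<^sup>2)"
proof -
  define m where "m = sqrt (h\<^sup>2 + 2 * \<beta>\<^sup>2 * r\<^sup>2)"
  have mp: "h\<^sup>2 + 2 * \<beta>\<^sup>2 * r\<^sup>2 > 0" using hp by (simp add: add_pos_nonneg)
  have m2: "m\<^sup>2 = h\<^sup>2 + 2 * \<beta>\<^sup>2 * r\<^sup>2" "m > 0" unfolding m_def using mp by auto
  have "1 - (h/m)\<^sup>2 = (sqrt 2 * \<beta> * r / m)\<^sup>2"
    using m2 mp by (simp add: field_simps power_mult_distrib)
  then have s: "sqrt (1 - (h/m)\<^sup>2) = sqrt 2 * \<beta> * r / m"
    using assms bp m2 by simp
  have "Sf (r\<^sup>2) = sqrt (r\<^sup>2 * m\<^sup>2)" unfolding Sf_def m2 by (simp add: algebra_simps power2_eq_square)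
  also have "\<dots> = r * m" using assms m2(2) by (simp add: real_sqrt_mult)
  finally have S: "Sf (r\<^sup>2) = r * m" .
  have md: "sqrt (h\<^sup>2 + 2 * \<beta>\<^sup>2 * r\<^sup>2) = m" by (simp add: m_def)
  have mm: "m * (m * r) = r * (h\<^sup>2 + 2 * \<beta>\<^sup>2 * r\<^sup>2)"
  proof -
    have "m * (m * r) = m\<^sup>2 * r" by (simp add: power2_eq_square)
    then show ?thesis using m2(1) by simp
  qed
  show ?thesis unfolding md s S
    using m2(2) by (simp add: field_simps power2_eq_square mm)
qed
end

theorem lemma5p3:
  fixes h \<beta> :: real
  assumes "h > 0" and "\<beta> > 0"
  shows "(SUP p \<in> {-1..1} \<times> Plef \<beta>. Btilde h \<beta> (fst p) (snd p))
           = (SUP q \<in> {qP \<beta>..<1}. ereal (Bscr h \<beta> q))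
    \<and> concave_on {qP \<beta>..<1} (Bscr h \<beta>)
    \<and> (\<exists>qh. (qh \<in> {qP \<beta>..<1} \<and> (\<forall>q \<in> {qP \<beta>..<1}. Bscr h \<beta> q \<le> Bscr h \<beta> qh))
          \<and> (\<forall>q' \<in> {qP \<beta>..<1}. (\<forall>q \<in> {qP \<beta>..<1}. Bscr h \<beta> q \<le> Bscr h \<beta> q') \<longrightarrow> q' = qh)
          \<and> qh \<in> {qP \<beta><..<1} \<and> qh / (h\<^sup>2 + 2 * qh * \<beta>\<^sup>2) = (1 - qh)\<^sup>2
          \<and> (\<forall>q \<in> {qP \<beta><..<1}. q / (h\<^sup>2 + 2 * q * \<beta>\<^sup>2) = (1 - q)\<^sup>2 \<longrightarrow> q = qh)
          \<and> (let rh = sqrt qh; ah = h / sqrt (h\<^sup>2 + 2 * \<beta>\<^sup>2 * qh) in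
               ah \<in> {-1..1} \<and> rh \<in> Plef \<beta>
             \<and> (\<forall>a \<in> {-1..1}. \<forall>r \<in> Plef \<beta>. Btilde h \<beta> a r \<le> Btilde h \<beta> ah rh)
             \<and> (\<forall>a \<in> {-1..1}. \<forall>r \<in> Plef \<beta>.
                  (\<forall>a' \<in> {-1..1}. \<forall>r' \<in> Plef \<beta>. Btilde h \<beta> a' r' \<le> Btilde h \<beta> a r)
                  \<longrightarrow> a = ah \<and> r = rh)))"
proof -
  note hp = assms(1) and bp = assms(2)
  let ?C = "{qP \<beta>..<1}"
  let ?B = "Bscr h \<beta>"
  have qPb: "0 \<le> qP \<beta>" "qP \<beta> < 1" using qP_bounds[OF hp bp] by auto
  have plef: "0 \<le> r \<and> r \<le> 1" if "r \<in> Plef \<beta>" for r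
  proof -
    have a: "0 \<le> sqrt (qP \<beta>)" using qPb by simp
    have b: "sqrt (qP \<beta>) \<le> r" "r \<le> 1" using that unfolding Plef_def by auto
    from a b show ?thesis by linarith
  qed
  obtain qh where qh: "qh \<in> {qP \<beta><..<1}" "qh / (h\<^sup>2 + 2 * qh * \<beta>\<^sup>2) = (1 - qh)\<^sup>2"
    using root_exists[OF hp bp] by blast
  have qhC: "qh \<in> ?C" using qh by auto
  have qh0: "0 < qh" "qh < 1" using qh qPb by auto
  have mx: "\<forall>q \<in> ?C. ?B q \<le> ?B qh" using root_max[OF hp bp qh] .
  have uq: "\<forall>q' \<in> ?C. (\<forall>q \<in> ?C. ?B q \<le> ?B q') \<longrightarrow> q' = qh"
    using max_unique[OF hp bp _ qhC _ mx] by blast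
  have ur: "\<forall>q \<in> {qP \<beta><..<1}. q / (h\<^sup>2 + 2 * q * \<beta>\<^sup>2) = (1 - q)\<^sup>2 \<longrightarrow> q = qh"
  proof (intro ballI impI)
    fix q assume q: "q \<in> {qP \<beta><..<1}" "q / (h\<^sup>2 + 2 * q * \<beta>\<^sup>2) = (1 - q)\<^sup>2"
    then have "\<forall>x \<in> ?C. ?B x \<le> ?B q" using root_max[OF hp bp] by blast
    then show "q = qh" using uq q(1) by auto
  qed
  define rh where "rh = sqrt qh"
  define ah where "ah = h / sqrt (h\<^sup>2 + 2 * \<beta>\<^sup>2 * qh)"
  have rh: "rh > 0" "rh < 1" "rh\<^sup>2 = qh" using qh0 unfolding rh_def by auto
  have ah_alt: "ah = h / sqrt (h\<^sup>2 + 2 * \<beta>\<^sup>2 * rh\<^sup>2)" unfolding ah_def rh(3) ..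
  have ahI: "ah \<in> {-1..1}"
  proof -
    have "h \<le> sqrt (h\<^sup>2 + 2 * \<beta>\<^sup>2 * qh)" using qh0 by (intro real_le_rsqrt) auto
    moreover have "0 < sqrt (h\<^sup>2 + 2 * \<beta>\<^sup>2 * qh)" using hp qh0 by (simp add: add_pos_nonneg)
    ultimately have "ah \<le> 1" "0 \<le> ah" unfolding ah_def using hp by auto
    then show ?thesis by auto
  qed
  have rhP: "rh \<in> Plef \<beta>" unfolding Plef_def rh_def using qh qh0 by auto
  have val: "Btilde h \<beta> ah rh = ereal (?B qh)"
    unfolding Btilde_lt1[OF hp bp less_imp_le[OF rh(1)] rh(2)] ah_alt lin_attain[OF hp bp rh(1)]
    by (simp add: Bscr_split[OF hp bp] rh(3))
  have r2C: "r\<^sup>2 \<in> ?C" if "r \<in> Plef \<beta>" "r < 1" for r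
  proof -
    have r0': "sqrt (qP \<beta>) \<le> r" using that unfolding Plef_def by auto
    have r0: "sqrt (qP \<beta>) \<le> r" "0 \<le> r" using r0' real_sqrt_ge_zero[OF qPb(1)] by linarith+
    then have "(sqrt (qP \<beta>))\<^sup>2 \<le> r\<^sup>2" using qPb by (intro power_mono) auto
    then have "qP \<beta> \<le> r\<^sup>2" using qPb by simp
    moreover have "r\<^sup>2 < 1" using r0 that(2) by (simp add: power_less_one_iff abs_square_less_1)
    ultimately show ?thesis by auto
  qed
  have bound: "Btilde h \<beta> a r \<le> ereal (?B qh)" if a: "a \<in> {-1..1}" and r: "r \<in> Plef \<beta>" for a r
  proof (cases "r = 1")
    case True then show ?thesis by (simp add: Btilde_one[OF hp bp])
  next
    case False
    have r01: "0 \<le> r" "r < 1" using plef[OF r] False by auto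
    have "h * (r * a) + sqrt 2 * \<beta> * r\<^sup>2 * sqrt (1 - a\<^sup>2) + Rf \<beta> (r\<^sup>2) \<le> ?B (r\<^sup>2)"
      using lin_bound(1)[OF hp bp a r01(1)] by (simp add: Bscr_split[OF hp bp])
    also have "\<dots> \<le> ?B qh" using mx r2C[OF r r01(2)] by blast
    finally show ?thesis unfolding Btilde_lt1[OF hp bp r01] by simp
  qed
  have uniq: "a = ah \<and> r = rh"
    if a: "a \<in> {-1..1}" and r: "r \<in> Plef \<beta>"
      and m: "\<forall>a' \<in> {-1..1}. \<forall>r' \<in> Plef \<beta>. Btilde h \<beta> a' r' \<le> Btilde h \<beta> a r" for a r
  proof -
    have "Btilde h \<beta> ah rh \<le> Btilde h \<beta> a r" using m ahI rhP by blast
    then have ge: "ereal (?B qh) \<le> Btilde h \<beta> a r" unfolding val .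
    have "r \<noteq> 1" using ge Btilde_one[OF hp bp] by auto
    then have r01: "0 \<le> r" "r < 1" using plef[OF r] by auto
    define L where "L = h * (r * a) + sqrt 2 * \<beta> * r\<^sup>2 * sqrt (1 - a\<^sup>2)"
    have ge2: "?B qh \<le> L + Rf \<beta> (r\<^sup>2)" using ge unfolding Btilde_lt1[OF hp bp r01] L_def by simp
    have Lb: "L \<le> Sf h \<beta> (r\<^sup>2)" unfolding L_def by (rule lin_bound(1)[OF hp bp a r01(1)])
    have Bs: "?B (r\<^sup>2) = Sf h \<beta> (r\<^sup>2) + Rf \<beta> (r\<^sup>2)" by (rule Bscr_split[OF hp bp])
    have rC: "r\<^sup>2 \<in> ?C" using r2C[OF r r01(2)] .
    have le1: "?B (r\<^sup>2) \<le> ?B qh" using mx rC by blast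
    have le2: "?B qh \<le> ?B (r\<^sup>2)" using ge2 Lb Bs by linarith
    have "\<forall>q \<in> ?C. ?B q \<le> ?B (r\<^sup>2)" using mx le2 by (auto intro: order_trans)
    then have rq: "r\<^sup>2 = qh" using uq rC by blast
    then have rr: "r = rh" unfolding rh_def using r01 by (simp add: real_sqrt_unique)
    have LS: "L = Sf h \<beta> (r\<^sup>2)" using ge2 Lb Bs le1 by linarith
    have "a = h / sqrt (h\<^sup>2 + 2 * \<beta>\<^sup>2 * r\<^sup>2)"
      using lin_bound(2)[OF hp bp a r01(1)] LS rr rh(1) unfolding L_def by simp
    then show ?thesis using rr ah_alt by simp
  qed
  have sup1: "(SUP p \<in> {-1..1} \<times> Plef \<beta>. Btilde h \<beta> (fst p) (snd p)) = ereal (?B qh)"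
  proof (rule antisym)
    show "(SUP p \<in> {-1..1} \<times> Plef \<beta>. Btilde h \<beta> (fst p) (snd p)) \<le> ereal (?B qh)"
      by (rule SUP_least) (auto intro: bound)
    show "ereal (?B qh) \<le> (SUP p \<in> {-1..1} \<times> Plef \<beta>. Btilde h \<beta> (fst p) (snd p))"
      by (rule SUP_upper2[where i = "(ah, rh)"]) (use ahI rhP val in auto)
  qed
  have sup2: "(SUP q \<in> ?C. ereal (?B q)) = ereal (?B qh)"
  proof (rule antisym)
    show "(SUP q \<in> ?C. ereal (?B q)) \<le> ereal (?B qh)"
      by (rule SUP_least) (use mx in auto)
    show "ereal (?B qh) \<le> (SUP q \<in> ?C. ereal (?B q))"
      by (rule SUP_upper) (rule qhC)
  qed
  show ?thesis
    unfolding sup1 sup2 Let_def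
    apply (intro conjI exI[of _ qh])
               apply (rule refl)
              apply (rule Bscr_conc[OF hp bp])
             apply (rule qhC)
            apply (rule mx)
           apply (rule uq)
          apply (rule qh(1))
         apply (rule qh(2))
        apply (rule ur)
       apply (fold rh_def ah_def)
       apply (rule ahI)
      apply (rule rhP)
     apply (unfold val)
     apply (use bound in blast)
    apply (use uniq in blast)
    done
qed

end
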